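(* Let $G$ be a locally compact topological group, let $(X,G)$ be a minimal continuous action on a compact metrizable space, and let $(Y,G)$ be a factor of $(X,G)$ through a proximal factor map $\phi\colon X\to Y$. Then $$r_c(Y,G)\leq r_c(X,G)\leq r_m(Y,G).$$
   Context: A continuous action $(X,G)$ is a continuous map $G\times X\to X$, $(g,x)\mapsto gx$, with $g(hx)=(gh)x$ and $ex=x$; here $X$ is a compact metrizable space with compatible metric $d$. $(X,G)$ is minimal if every orbit $Gx$ is dense in $X$. A factor map $\phi\colon X\to Y$ between continuous actions is a continuous surjection with $\phi(gx)=g\phi(x)$ for all $g,x$. A pair $(x_1,x_2)\in X^2$ is proximal if for every $\varepsilon>0$ there is $g\in G$ with $d(gx_1,gx_2)<\varepsilon$; $P(X,G)$ denotes the set of proximal pairs. A factor map $\phi$ is proximal if $\phi(x)=\phi(y)$ implies $(x,y)\in P(X,G)$. An action is equicontinuous if for every $\varepsilon>0$ there is $\delta>0$ such that $d(x,y)<\delta$ implies $d(gx,gy)<\varepsilon$ for all $g\in G$. The maximal equicontinuous factor $(X_{eq},G)$, with factor map $\pi_{eq}\colon X\to X_{eq}$, is the (unique up to conjugacy) equicontinuous factor of $(X,G)$ of which every equicontinuous factor of $(X,G)$ is a factor. The minimal rank is $r_m(X,G)=\inf\{|\pi_{eq}^{-1}(y)|: y\in X_{eq}\}$ (cardinalities, possibly infinite). The coincidence rank: for $y\in X_{eq}$ let $r_c(X,G;y)=\sup\{n\in\mathbb{N}:\exists x_1,\dots,x_n\in\pi_{eq}^{-1}(y)$ with $(x_i,x_j)\notin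 P(X,G)$ for all $i\neq j\}$; for minimal actions this value does not depend on $y$, and $r_c(X,G)$ denotes this common value. *)

theory Defs
  imports "HOL-Analysis.Analysis" "HOL-Library.Extended_Nat"
begin

text \<open>A compact metrizable space is represented as a compact subset X of a
metric-space type; the group G is a type of class topological_group_add
(group operation written +, not assumed commutative).\<close>

definition continuous_action ::
  "('g::topological_group_add \<Rightarrow> 'x::metric_space \<Rightarrow> 'x) \<Rightarrow> 'x set \<Rightarrow> bool" where
  "continuous_action act X \<longleftrightarrow>
     compact X \<and>
     (\<forall>g. \<forall>x\<in>X. act g x \<in> X) \<and>
     continuous_on (UNIV \<times> X) (\<lambda>(g, x). act g x) \<and>
     (\<forall>g h. \<forall>x\<in>X. act g (act h x) = act (g + h) x) \<and>
     (\<forall>x\<in>X. act 0 x = x)"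

definition minimal_action ::
  "('g::topological_group_add \<Rightarrow> 'x::metric_space \<Rightarrow> 'x) \<Rightarrow> 'x set \<Rightarrow> bool" where
  "minimal_action act X \<longleftrightarrow> (\<forall>x\<in>X. X \<subseteq> closure (range (\<lambda>g. act g x)))"

definition factor_map ::
  "('g::topological_group_add \<Rightarrow> 'x::metric_space \<Rightarrow> 'x) \<Rightarrow> 'x set \<Rightarrow>
   ('g \<Rightarrow> 'y::metric_space \<Rightarrow> 'y) \<Rightarrow> 'y set \<Rightarrow> ('x \<Rightarrow> 'y) \<Rightarrow> bool" where
  "factor_map actX X actY Y \<phi> \<longleftrightarrow>
     continuous_on X \<phi> \<and> \<phi> ` X = Y \<and> (\<forall>g. \<forall>x\<in>X. \<phi> (actX g x) = actY g (\<phi> x))"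

definition proximal_pairs ::
  "('g::topological_group_add \<Rightarrow> 'x::metric_space \<Rightarrow> 'x) \<Rightarrow> 'x set \<Rightarrow> ('x \<times> 'x) set" where
  "proximal_pairs act X =
     {(x1, x2). x1 \<in> X \<and> x2 \<in> X \<and> (\<forall>\<epsilon>>0. \<exists>g. dist (act g x1) (act g x2) < \<epsilon>)}"

definition proximal_factor_map ::
  "('g::topological_group_add \<Rightarrow> 'x::metric_space \<Rightarrow> 'x) \<Rightarrow> 'x set \<Rightarrow>
   ('g \<Rightarrow> 'y::metric_space \<Rightarrow> 'y) \<Rightarrow> 'y set \<Rightarrow> ('x \<Rightarrow> 'y) \<Rightarrow> bool" where
  "proximal_factor_map actX X actY Y \<phi> \<longleftrightarrow>
     factor_map actX X actY Y \<phi> \<and>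
     (\<forall>x\<in>X. \<forall>y\<in>X. \<phi> x = \<phi> y \<longrightarrow> (x, y) \<in> proximal_pairs actX X)"

definition equicontinuous_action ::
  "('g::topological_group_add \<Rightarrow> 'x::metric_space \<Rightarrow> 'x) \<Rightarrow> 'x set \<Rightarrow> bool" where
  "equicontinuous_action act X \<longleftrightarrow>
     (\<forall>\<epsilon>>0. \<exists>\<delta>>0. \<forall>x\<in>X. \<forall>y\<in>X. dist x y < \<delta> \<longrightarrow> (\<forall>g. dist (act g x) (act g y) < \<epsilon>))"

text \<open>Every compact
metrizable space is homeomorphic to a compact subset of the Hilbert-cube-like
space nat => real (product topology, Function_Metric), so "every equicontinuous
factor" is expressed by quantifying over equicontinuous factors whose phase space
is a compact subset of nat => real.\<close>

definition max_equicontinuous_factor ::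
  "('g::topological_group_add \<Rightarrow> 'x::metric_space \<Rightarrow> 'x) \<Rightarrow> 'x set \<Rightarrow>
   ('g \<Rightarrow> 'e::metric_space \<Rightarrow> 'e) \<Rightarrow> 'e set \<Rightarrow> ('x \<Rightarrow> 'e) \<Rightarrow> bool" where
  "max_equicontinuous_factor act X actE E \<pi> \<longleftrightarrow>
     continuous_action actE E \<and> equicontinuous_action actE E \<and>
     factor_map act X actE E \<pi> \<and>
     (\<forall>(actZ :: 'g \<Rightarrow> (nat \<Rightarrow> real) \<Rightarrow> (nat \<Rightarrow> real)) Z \<psi>.
        continuous_action actZ Z \<and> equicontinuous_action actZ Z \<and> factor_map act X actZ Z \<psi>
        \<longrightarrow> (\<exists>\<theta>. factor_map actE E actZ Z \<theta> \<and> (\<forall>x\<in>X. \<psi> x = \<theta> (\<pi> x))))"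

definition ecard :: "'a set \<Rightarrow> enat" where
  "ecard A = (if finite A then enat (card A) else \<infinity>)"

definition minimal_rank :: "'x set \<Rightarrow> 'e set \<Rightarrow> ('x \<Rightarrow> 'e) \<Rightarrow> enat" where
  "minimal_rank X E \<pi> = (INF y\<in>E. ecard {x\<in>X. \<pi> x = y})"

definition coincidence_rank_at ::
  "('g::topological_group_add \<Rightarrow> 'x::metric_space \<Rightarrow> 'x) \<Rightarrow> 'x set \<Rightarrow> ('x \<Rightarrow> 'e) \<Rightarrow> 'e \<Rightarrow> enat" where
  "coincidence_rank_at act X \<pi> y =
     Sup {enat n | n. \<exists>xs :: nat \<Rightarrow> 'x.
            (\<forall>i<n. xs i \<in> X \<and> \<pi> (xs i) = y) \<and>
            (\<forall>i<n. \<forall>j<n. i \<noteq> j \<longrightarrow> (xs i, xs j) \<notin> proximal_pairs act X)}"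

end

theory Submission
  imports Defs
begin

lemma compact_embed:
  fixes W :: "'w::metric_space set"
  assumes "compact W"
  obtains e :: "'w \<Rightarrow> nat \<Rightarrow> real" where "continuous_on W e" "inj_on e W"
proof (cases "W = {}")
  case True
  then show ?thesis using that[of "\<lambda>_ _. 0"] by auto
next
  case False
  have "\<exists>K. finite K \<and> K \<subseteq> W \<and> W \<subseteq> (\<Union>c\<in>K. ball c (1 / (Suc k)))" for k :: nat
  proof -
    have "W \<subseteq> (\<Union>c\<in>W. ball c (1 / (Suc k)))" by auto
    from compactE_image[OF assms _ this] obtain K where "K \<subseteq> W" "finite K"
      "W \<subseteq> (\<Union>c\<in>K. ball c (1 / (Suc k)))" by auto
    then show ?thesis by blast
  qed
  then obtain K where K: "\<And>k. finite (K k)" "\<And>k. K k \<subseteq> W"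
     "\<And>k. W \<subseteq> (\<Union>c\<in>K k. ball c (1 / (Suc k)))" by metis
  define D where "D = (\<Union>k. K k)"
  have cD: "countable D" unfolding D_def using K(1) by (simp add: countable_finite)
  have DW: "D \<subseteq> W" unfolding D_def using K(2) by auto
  obtain w0 where "w0 \<in> W" using False by auto
  then obtain c0 where "c0 \<in> K 0" using K(3)[of 0] by auto
  hence Dne: "D \<noteq> {}" unfolding D_def by auto
  define d where "d = from_nat_into D"
  have rd: "range d = D" unfolding d_def using cD Dne by simp
  define e where "e = (\<lambda>w n. dist w (d n))"
  show ?thesis
  proof (rule that)
    show "continuous_on W e" unfolding e_def
      by (intro continuous_on_coordinatewise_then_product continuous_intros)
    show "inj_on e W"
    proof (rule inj_onI)
      fix w w' assume w: "w \<in> W" "w' \<in> W" "e w = e w'"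
      have *: "dist w w' < 2 / Suc k" for k
      proof -
        obtain c where c: "c \<in> K k" "dist c w < 1 / Suc k" using K(3)[of k] w(1) by auto
        have "c \<in> D" using c unfolding D_def by auto
        then obtain n where n: "d n = c" using rd by auto
        have "dist w' c = dist w c" using w(3) n unfolding e_def by (metis fun_cong)
        then have "dist w w' \<le> dist w c + dist w' c" by (metis dist_commute dist_triangle)
        also have "\<dots> < 2 / Suc k" using c(2) \<open>dist w' c = dist w c\<close> by (simp add: dist_commute)
        finally show ?thesis .
      qed
      show "w = w'"
      proof (rule ccontr)
        assume "w \<noteq> w'"
        then have "dist w w' / 2 > 0" by simp
        then obtain k where "inverse (real (Suc k)) < dist w w' / 2" using reals_Archimedean by blast
        moreover have "dist w w' < 2 / Suc k" using * by blast
        ultimately show False by (simp add: field_simps)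
      qed
    qed
  qed
qed

lemma max_eq_transfer:
  fixes act :: "'g::topological_group_add \<Rightarrow> 'x::metric_space \<Rightarrow> 'x"
    and actE :: "'g \<Rightarrow> 'e::metric_space \<Rightarrow> 'e"
    and actW :: "'g \<Rightarrow> 'w::metric_space \<Rightarrow> 'w"
  assumes mx: "max_equicontinuous_factor act X actE E \<pi>"
    and cW: "continuous_action actW W" and eW: "equicontinuous_action actW W"
    and fW: "factor_map act X actW W \<psi>"
    and x: "x \<in> X" "x' \<in> X" "\<pi> x = \<pi> x'"
  shows "\<psi> x = \<psi> x'"
proof -
  have cpW: "compact W" using cW unfolding continuous_action_def by auto
  obtain e :: "'w \<Rightarrow> nat \<Rightarrow> real" where ec: "continuous_on W e" and ei: "inj_on e W"
    using compact_embed[OF cpW] by blast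
  define ie where "ie = inv_into W e"
  have iee[simp]: "w \<in> W \<Longrightarrow> ie (e w) = w" for w unfolding ie_def using ei by simp
  define Z where "Z = e ` W"
  define actZ where "actZ = (\<lambda>g z. e (actW g (ie z)))"
  have cW': "\<forall>g. \<forall>x\<in>W. actW g x \<in> W" "continuous_on (UNIV \<times> W) (\<lambda>(g, x). actW g x)"
    "\<forall>g h. \<forall>x\<in>W. actW g (actW h x) = actW (g + h) x" "\<forall>x\<in>W. actW 0 x = x"
    using cW unfolding continuous_action_def by auto
  have iec: "continuous_on Z ie" unfolding Z_def using continuous_on_inv[OF ec cpW] by simp
  have cpZ: "compact Z" unfolding Z_def using compact_continuous_image[OF ec cpW] .
  have ieZ: "z \<in> Z \<Longrightarrow> ie z \<in> W \<and> e (ie z) = z" for z unfolding Z_def by auto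
  have cZ: "continuous_action actZ Z"
    unfolding continuous_action_def
  proof (intro conjI ballI allI)
    show "compact Z" by fact
    show "actZ g z \<in> Z" if "z \<in> Z" for g z
      unfolding actZ_def Z_def using ieZ[OF that] cW'(1) by auto
    show "actZ g (actZ h z) = actZ (g + h) z" if "z \<in> Z" for g h z
      unfolding actZ_def using ieZ[OF that] cW'(1,3) by auto
    show "actZ 0 z = z" if "z \<in> Z" for z
      unfolding actZ_def using ieZ[OF that] cW'(4) by auto
    have c1: "continuous_on (UNIV \<times> Z) (\<lambda>(g, z). (g, ie z))"
      unfolding case_prod_unfold
      by (intro continuous_on_Pair continuous_on_fst continuous_on_id
            continuous_on_compose2[OF iec continuous_on_snd]) auto
    have im1: "(\<lambda>(g, z). (g, ie z)) ` (UNIV \<times> Z) \<subseteq> UNIV \<times> W" using ieZ by auto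
    have c2: "continuous_on (UNIV \<times> Z) ((\<lambda>(g, x). actW g x) \<circ> (\<lambda>(g, z). (g, ie z)))"
      by (rule continuous_on_compose[OF c1 continuous_on_subset[OF cW'(2) im1]])
    have im2: "((\<lambda>(g, x). actW g x) \<circ> (\<lambda>(g, z). (g, ie z))) ` (UNIV \<times> Z) \<subseteq> W"
      using ieZ cW'(1) by auto
    have "continuous_on (UNIV \<times> Z) (e \<circ> ((\<lambda>(g, x). actW g x) \<circ> (\<lambda>(g, z). (g, ie z))))"
      by (rule continuous_on_compose[OF c2 continuous_on_subset[OF ec im2]])
    then show "continuous_on (UNIV \<times> Z) (\<lambda>(g, x). actZ g x)"
      unfolding actZ_def by (simp add: o_def case_prod_unfold)
  qed
  have eZ: "equicontinuous_action actZ Z"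
    unfolding equicontinuous_action_def
  proof (intro allI impI)
    fix \<epsilon> :: real assume "\<epsilon> > 0"
    from compact_uniformly_continuous[OF ec cpW, unfolded uniformly_continuous_on_def, rule_format, OF this]
    obtain d1 where d1: "d1 > 0" "\<And>a b. a \<in> W \<Longrightarrow> b \<in> W \<Longrightarrow> dist b a < d1 \<Longrightarrow> dist (e b) (e a) < \<epsilon>"
      by blast
    from eW[unfolded equicontinuous_action_def, rule_format, OF d1(1)]
    obtain d2 where d2: "d2 > 0" "\<And>a b g. a \<in> W \<Longrightarrow> b \<in> W \<Longrightarrow> dist a b < d2 \<Longrightarrow> dist (actW g a) (actW g b) < d1"
      by blast
    from compact_uniformly_continuous[OF iec cpZ, unfolded uniformly_continuous_on_def, rule_format, OF d2(1)]
    obtain d3 where d3: "d3 > 0" "\<And>a b. a \<in> Z \<Longrightarrow> b \<in> Z \<Longrightarrow> dist b a < d3 \<Longrightarrow> dist (ie b) (ie a) < d2"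
      by blast
    show "\<exists>\<delta>>0. \<forall>x\<in>Z. \<forall>y\<in>Z. dist x y < \<delta> \<longrightarrow> (\<forall>g. dist (actZ g x) (actZ g y) < \<epsilon>)"
    proof (intro exI[of _ d3] conjI ballI impI allI)
      fix a b g assume ab: "a \<in> Z" "b \<in> Z" "dist a b < d3"
      have "dist (ie a) (ie b) < d2" using d3(2)[OF ab(2) ab(1)] ab(3) by (simp add: dist_commute)
      then have "dist (actW g (ie a)) (actW g (ie b)) < d1" using d2(2) ieZ ab by blast
      then have "dist (e (actW g (ie a))) (e (actW g (ie b))) < \<epsilon>"
        using d1(2) ieZ ab cW'(1) by (metis dist_commute)
      then show "dist (actZ g a) (actZ g b) < \<epsilon>" unfolding actZ_def .
    qed (use d3 in auto)
  qed
  have fW': "continuous_on X \<psi>" "\<psi> ` X = W" "\<forall>g. \<forall>x\<in>X. \<psi> (act g x) = actW g (\<psi> x)"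
    using fW unfolding factor_map_def by auto
  have fZ: "factor_map act X actZ Z (e \<circ> \<psi>)"
    unfolding factor_map_def
  proof (intro conjI ballI allI)
    show "continuous_on X (e \<circ> \<psi>)"
      using continuous_on_compose[OF fW'(1)] ec fW'(2) by simp
    show "(e \<circ> \<psi>) ` X = Z" unfolding Z_def using fW'(2) by (metis image_comp)
    show "(e \<circ> \<psi>) (act g x) = actZ g ((e \<circ> \<psi>) x)" if "x \<in> X" for g x
      unfolding actZ_def using fW'(2,3) that by auto
  qed
  from mx[unfolded max_equicontinuous_factor_def] cZ eZ fZ
  obtain \<theta> where "\<forall>x\<in>X. (e \<circ> \<psi>) x = \<theta> (\<pi> x)" by blast
  then have "e (\<psi> x) = e (\<psi> x')" using x by auto
  then show ?thesis using ei fW'(2) x(1,2) by (auto dest: inj_onD)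
qed

lemma proximal_image:
  fixes act :: "'g::topological_group_add \<Rightarrow> 'x::metric_space \<Rightarrow> 'x"
    and actE :: "'g \<Rightarrow> 'e::metric_space \<Rightarrow> 'e"
  assumes cX: "continuous_action act X" and f: "factor_map act X actE E \<pi>"
    and p: "(x, x') \<in> proximal_pairs act X"
  shows "(\<pi> x, \<pi> x') \<in> proximal_pairs actE E"
proof -
  have cpX: "compact X" and aX: "\<forall>g. \<forall>x\<in>X. act g x \<in> X" using cX unfolding continuous_action_def by auto
  have fc: "continuous_on X \<pi>" "\<pi> ` X = E" "\<forall>g. \<forall>x\<in>X. \<pi> (act g x) = actE g (\<pi> x)"
    using f unfolding factor_map_def by auto
  have xX: "x \<in> X" "x' \<in> X" and px: "\<forall>\<epsilon>>0. \<exists>g. dist (act g x) (act g x') < \<epsilon>"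
    using p unfolding proximal_pairs_def by auto
  show ?thesis unfolding proximal_pairs_def
  proof (clarify, intro conjI allI impI)
    show "\<pi> x \<in> E" "\<pi> x' \<in> E" using xX fc(2) by auto
    fix \<epsilon> :: real assume "\<epsilon> > 0"
    from compact_uniformly_continuous[OF fc(1) cpX, unfolded uniformly_continuous_on_def, rule_format, OF this]
    obtain d where d: "d > 0" "\<And>a b. a \<in> X \<Longrightarrow> b \<in> X \<Longrightarrow> dist b a < d \<Longrightarrow> dist (\<pi> b) (\<pi> a) < \<epsilon>"
      by blast
    obtain g where "dist (act g x) (act g x') < d" using px d(1) by blast
    moreover have "act g x \<in> X" "act g x' \<in> X" using aX xX by auto
    ultimately have "dist (\<pi> (act g x)) (\<pi> (act g x')) < \<epsilon>" using d(2) by (simp add: dist_commute)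
    then show "\<exists>g. dist (actE g (\<pi> x)) (actE g (\<pi> x')) < \<epsilon>" using fc(3) xX by auto
  qed
qed

lemma proximal_collapse:
  fixes actE :: "'g::topological_group_add \<Rightarrow> 'e::metric_space \<Rightarrow> 'e"
  assumes cE: "continuous_action actE E" and eE: "equicontinuous_action actE E"
    and p: "(a, b) \<in> proximal_pairs actE E"
  shows "a = b"
proof (rule ccontr)
  assume ne: "a \<noteq> b"
  have aE: "\<forall>g. \<forall>x\<in>E. actE g x \<in> E" "\<forall>g h. \<forall>x\<in>E. actE g (actE h x) = actE (g + h) x"
    "\<forall>x\<in>E. actE 0 x = x"
    using cE unfolding continuous_action_def by auto
  have ab: "a \<in> E" "b \<in> E" and pa: "\<forall>\<epsilon>>0. \<exists>g. dist (actE g a) (actE g b) < \<epsilon>"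
    using p unfolding proximal_pairs_def by auto
  have "dist a b > 0" using ne by simp
  from eE[unfolded equicontinuous_action_def, rule_format, OF this]
  obtain d where d: "d > 0" "\<And>x y g. x \<in> E \<Longrightarrow> y \<in> E \<Longrightarrow> dist x y < d \<Longrightarrow> dist (actE g x) (actE g y) < dist a b"
    by blast
  obtain g where "dist (actE g a) (actE g b) < d" using pa d(1) by blast
  then have "dist (actE (-g) (actE g a)) (actE (-g) (actE g b)) < dist a b"
    using d(2) aE(1) ab by blast
  moreover have "actE (-g) (actE g a) = a" "actE (-g) (actE g b) = b" using aE(2,3) ab by auto
  ultimately show False by simp
qed

lemma induced_factor:
  fixes actX :: "'g::topological_group_add \<Rightarrow> 'x::metric_space \<Rightarrow> 'x"
    and actY :: "'g \<Rightarrow> 'y::metric_space \<Rightarrow> 'y"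
    and actE :: "'g \<Rightarrow> 'e::metric_space \<Rightarrow> 'e"
  assumes cX: "continuous_action actX X" and cY: "continuous_action actY Y"
    and pf: "proximal_factor_map actX X actY Y \<phi>"
    and cE: "continuous_action actE E" and eE: "equicontinuous_action actE E"
    and fE: "factor_map actX X actE E \<pi>"
  shows "\<exists>\<psi>. factor_map actY Y actE E \<psi> \<and> (\<forall>x\<in>X. \<psi> (\<phi> x) = \<pi> x)"
proof -
  have cpX: "compact X" and aX: "\<forall>g. \<forall>x\<in>X. actX g x \<in> X" using cX unfolding continuous_action_def by auto
  have fp: "continuous_on X \<phi>" "\<phi> ` X = Y" "\<forall>g. \<forall>x\<in>X. \<phi> (actX g x) = actY g (\<phi> x)"
    and pr: "\<forall>x\<in>X. \<forall>y\<in>X. \<phi> x = \<phi> y \<longrightarrow> (x, y) \<in> proximal_pairs actX X"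
    using pf unfolding proximal_factor_map_def factor_map_def by auto
  have fc: "continuous_on X \<pi>" "\<pi> ` X = E" "\<forall>g. \<forall>x\<in>X. \<pi> (actX g x) = actE g (\<pi> x)"
    using fE unfolding factor_map_def by auto
  have wd: "x \<in> X \<Longrightarrow> y \<in> X \<Longrightarrow> \<phi> x = \<phi> y \<Longrightarrow> \<pi> x = \<pi> y" for x y
  proof -
    assume "x \<in> X" "y \<in> X" "\<phi> x = \<phi> y"
    then have "(x, y) \<in> proximal_pairs actX X" using pr by blast
    then show ?thesis by (rule proximal_collapse[OF cE eE proximal_image[OF cX fE]])
  qed
  define \<psi> where "\<psi> = (\<lambda>y. \<pi> (SOME x. x \<in> X \<and> \<phi> x = y))"
  have psi: "x \<in> X \<Longrightarrow> \<psi> (\<phi> x) = \<pi> x" for x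
  proof -
    assume x: "x \<in> X"
    have "\<exists>x'. x' \<in> X \<and> \<phi> x' = \<phi> x" using x by blast
    then have "(SOME x'. x' \<in> X \<and> \<phi> x' = \<phi> x) \<in> X \<and> \<phi> (SOME x'. x' \<in> X \<and> \<phi> x' = \<phi> x) = \<phi> x"
      by (rule someI_ex)
    then show ?thesis unfolding \<psi>_def using wd[OF _ x] by simp
  qed
  have cpY: "compact Y" using cY unfolding continuous_action_def by auto
  have "factor_map actY Y actE E \<psi>"
    unfolding factor_map_def
  proof (intro conjI ballI allI)
    show "continuous_on Y \<psi>"
      unfolding continuous_on_closed_vimage[OF compact_imp_closed[OF cpY]]
    proof (intro allI impI)
      fix B :: "'e set" assume B: "closed B"
      have eq: "\<psi> -` B \<inter> Y = \<phi> ` (\<pi> -` B \<inter> X)"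
      proof
        show "\<psi> -` B \<inter> Y \<subseteq> \<phi> ` (\<pi> -` B \<inter> X)"
        proof
          fix y assume "y \<in> \<psi> -` B \<inter> Y"
          then obtain x where "x \<in> X" "y = \<phi> x" "\<psi> y \<in> B" using fp(2) by auto
          then show "y \<in> \<phi> ` (\<pi> -` B \<inter> X)" using psi by auto
        qed
        show "\<phi> ` (\<pi> -` B \<inter> X) \<subseteq> \<psi> -` B \<inter> Y" using psi fp(2) by auto
      qed
      have "closed (\<pi> -` B \<inter> X)"
        using closed_vimage_Int[OF B fc(1) compact_imp_closed[OF cpX]] .
      then have "compact (X \<inter> (\<pi> -` B \<inter> X))" by (rule compact_Int_closed[OF cpX])
      moreover have "X \<inter> (\<pi> -` B \<inter> X) = \<pi> -` B \<inter> X" by blast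
      ultimately have "compact (\<pi> -` B \<inter> X)" by simp
      moreover have "continuous_on (\<pi> -` B \<inter> X) \<phi>" by (rule continuous_on_subset[OF fp(1)]) auto
      ultimately have "compact (\<phi> ` (\<pi> -` B \<inter> X))"
        using compact_continuous_image by blast
      then show "closed (\<psi> -` B \<inter> Y)" unfolding eq by (rule compact_imp_closed)
    qed
    have "\<psi> ` Y = \<psi> ` \<phi> ` X" using fp(2) by simp
    also have "\<dots> = \<pi> ` X" unfolding image_comp using psi by (intro image_cong) auto
    finally show "\<psi> ` Y = E" using fc(2) by simp
    show "\<psi> (actY g y) = actE g (\<psi> y)" if yY: "y \<in> Y" for g y
    proof -
      obtain x where x: "x \<in> X" "y = \<phi> x" using yY fp(2) by auto
      have "\<psi> (actY g y) = \<psi> (\<phi> (actX g x))" using fp(3) x by auto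
      also have "\<dots> = \<pi> (actX g x)" using psi aX x by auto
      also have "\<dots> = actE g (\<psi> y)" using fc(3) psi x by auto
      finally show ?thesis .
    qed
  qed
  then show ?thesis using psi by blast
qed

lemma enat_le_ecard:
  fixes f :: "nat \<Rightarrow> 'a"
  assumes "\<forall>i<n. f i \<in> A" "inj_on f {..<n}"
  shows "enat n \<le> ecard A"
proof (cases "finite A")
  case True
  have "f ` {..<n} \<subseteq> A" using assms(1) by auto
  then have "card (f ` {..<n}) \<le> card A" using True by (rule card_mono[rotated])
  moreover have "card (f ` {..<n}) = n" using card_image[OF assms(2)] by simp
  ultimately show ?thesis using True unfolding ecard_def by simp
next
  case False
  then show ?thesis unfolding ecard_def by simp
qed

lemma act_cont:
  fixes act :: "'g::topological_group_add \<Rightarrow> 'x::metric_space \<Rightarrow> 'x"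
  assumes cX: "continuous_action act X"
  shows "continuous_on X (act h)"
proof -
  have c: "continuous_on (UNIV \<times> X) (\<lambda>(g, x). act g x)" using cX unfolding continuous_action_def by auto
  have "continuous_on X ((\<lambda>(g, x). act g x) \<circ> (\<lambda>x. (h, x)))"
    by (rule continuous_on_compose[OF _ continuous_on_subset[OF c]]) (auto intro: continuous_intros)
  then show ?thesis by (simp add: o_def)
qed

lemma move_tuple:
  fixes act :: "'g::topological_group_add \<Rightarrow> 'x::metric_space \<Rightarrow> 'x" and F :: "'x \<Rightarrow> 'f::metric_space"
    and n :: nat and xs :: "nat \<Rightarrow> 'x"
  assumes cX: "continuous_action act X" and min: "minimal_action act X"
    and x0: "x0 \<in> X" and x': "x' \<in> X"
    and xs: "\<forall>i<n. xs i \<in> X"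
    and Fc: "continuous_on X F"
    and Feq: "\<forall>g. \<forall>i<n. F (act g (xs i)) = F (act g x0)"
  shows "\<exists>zs. (\<forall>i<n. zs i \<in> X \<and> F (zs i) = F x') \<and>
     (\<forall>i<n. \<forall>j<n. (xs i, xs j) \<notin> proximal_pairs act X \<longrightarrow> (zs i, zs j) \<notin> proximal_pairs act X)"
proof -
  have cpX: "compact X" and aX: "\<forall>g. \<forall>x\<in>X. act g x \<in> X"
    and comp: "\<forall>g h. \<forall>x\<in>X. act g (act h x) = act (g + h) x"
    using cX unfolding continuous_action_def by auto
  have sc: "seq_compact X" using compact_imp_seq_compact[OF cpX] .
  have "x' \<in> closure (range (\<lambda>g. act g x0))" using min x0 x' unfolding minimal_action_def by auto
  then obtain s where s: "\<forall>k. s k \<in> range (\<lambda>g. act g x0)" "s \<longlonglongrightarrow> x'"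
    unfolding closure_sequential by blast
  have "\<forall>k. \<exists>g. s k = act g x0" using s(1) by auto
  then obtain g where g: "\<And>k. s k = act (g k) x0" by metis
  have sub: "m \<le> n \<Longrightarrow> \<exists>r. strict_mono r \<and> (\<forall>i<m. \<exists>z\<in>X. (\<lambda>k. act (g (r k)) (xs i)) \<longlonglongrightarrow> z)" for m
  proof (induction m)
    case 0
    show ?case by (intro exI[of _ id]) (auto simp: strict_mono_def)
  next
    case (Suc m)
    then obtain r where r: "strict_mono r" "\<forall>i<m. \<exists>z\<in>X. (\<lambda>k. act (g (r k)) (xs i)) \<longlonglongrightarrow> z" by auto
    have "\<forall>k. act (g (r k)) (xs m) \<in> X" using aX xs Suc.prems by auto
    from seq_compactE[OF sc this] obtain l r' where lr: "l \<in> X" "strict_mono r'"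
      "((\<lambda>k. act (g (r k)) (xs m)) \<circ> r') \<longlonglongrightarrow> l" by blast
    show ?case
    proof (intro exI[of _ "r \<circ> r'"] conjI allI impI)
      show "strict_mono (r \<circ> r')" using r(1) lr(2) by (simp add: strict_mono_o)
      fix i assume i: "i < Suc m"
      show "\<exists>z\<in>X. (\<lambda>k. act (g ((r \<circ> r') k)) (xs i)) \<longlonglongrightarrow> z"
      proof (cases "i = m")
        case True
        then show ?thesis using lr(1,3) by (auto simp: o_def)
      next
        case False
        then obtain z where "z \<in> X" "(\<lambda>k. act (g (r k)) (xs i)) \<longlonglongrightarrow> z" using r(2) i False less_SucE by blast
        then show ?thesis using LIMSEQ_subseq_LIMSEQ[OF _ lr(2)] by (auto simp: o_def)
      qed
    qed
  qed
  obtain r where r: "strict_mono r" "\<forall>i<n. \<exists>z\<in>X. (\<lambda>k. act (g (r k)) (xs i)) \<longlonglongrightarrow> z"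
    using sub[of n] by auto
  define G where "G = g \<circ> r"
  have "\<forall>i. \<exists>z. i < n \<longrightarrow> z \<in> X \<and> (\<lambda>k. act (G k) (xs i)) \<longlonglongrightarrow> z"
    using r(2) unfolding G_def by auto
  then obtain zs where zs: "\<And>i. i < n \<Longrightarrow> zs i \<in> X" "\<And>i. i < n \<Longrightarrow> (\<lambda>k. act (G k) (xs i)) \<longlonglongrightarrow> zs i"
    by metis
  have l0: "(\<lambda>k. act (G k) x0) \<longlonglongrightarrow> x'"
    using LIMSEQ_subseq_LIMSEQ[OF s(2) r(1)] unfolding G_def by (simp add: o_def g)
  have F1: "F (zs i) = F x'" if i: "i < n" for i
  proof -
    have "(\<lambda>k. F (act (G k) (xs i))) \<longlonglongrightarrow> F (zs i)"
      by (rule continuous_on_tendsto_compose[OF Fc zs(2)[OF i] zs(1)[OF i]]) (use aX xs i in auto)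
    moreover have "(\<lambda>k. F (act (G k) x0)) \<longlonglongrightarrow> F x'"
      by (rule continuous_on_tendsto_compose[OF Fc l0 x']) (use aX x0 in auto)
    ultimately show ?thesis using Feq i LIMSEQ_unique by auto
  qed
  have NP: "(zs i, zs j) \<notin> proximal_pairs act X"
    if ij: "i < n" "j < n" and np: "(xs i, xs j) \<notin> proximal_pairs act X" for i j
  proof
    assume pz: "(zs i, zs j) \<in> proximal_pairs act X"
    from np xs ij obtain \<epsilon> :: real where e: "\<epsilon> > 0" "\<And>h. \<not> dist (act h (xs i)) (act h (xs j)) < \<epsilon>"
      unfolding proximal_pairs_def by auto
    from pz e(1) obtain h where h: "dist (act h (zs i)) (act h (zs j)) < \<epsilon>"
      unfolding proximal_pairs_def by auto
    have lim: "(\<lambda>k. act h (act (G k) (xs a))) \<longlonglongrightarrow> act h (zs a)" if a: "a < n" for a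
      by (rule continuous_on_tendsto_compose[OF act_cont[OF cX] zs(2)[OF a] zs(1)[OF a]])
        (use aX xs a in auto)
    have "(\<lambda>k. dist (act h (act (G k) (xs i))) (act h (act (G k) (xs j))))
            \<longlonglongrightarrow> dist (act h (zs i)) (act h (zs j))"
      by (rule tendsto_dist[OF lim[OF ij(1)] lim[OF ij(2)]])
    moreover have "\<forall>k. \<epsilon> \<le> dist (act h (act (G k) (xs i))) (act h (act (G k) (xs j)))"
    proof
      fix k
      have "act h (act (G k) (xs i)) = act (h + G k) (xs i)" "act h (act (G k) (xs j)) = act (h + G k) (xs j)"
        using comp xs ij by auto
      then show "\<epsilon> \<le> dist (act h (act (G k) (xs i))) (act h (act (G k) (xs j)))"
        using e(2)[of "h + G k"] by simp
    qed
    ultimately have "\<epsilon> \<le> dist (act h (zs i)) (act h (zs j))"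
      by (intro LIMSEQ_le_const) auto
    then show False using h by simp
  qed
  show ?thesis using zs(1) F1 NP by blast
qed

theorem lemma3p2:
  fixes actX :: "'g::{topological_group_add, t2_space} \<Rightarrow> 'x::metric_space \<Rightarrow> 'x"
    and actY :: "'g \<Rightarrow> 'y::metric_space \<Rightarrow> 'y"
    and actEX :: "'g \<Rightarrow> 'ex::metric_space \<Rightarrow> 'ex"
    and actEY :: "'g \<Rightarrow> 'ey::metric_space \<Rightarrow> 'ey"
    and X :: "'x set" and Y :: "'y set" and Xeq :: "'ex set" and Yeq :: "'ey set"
    and \<phi> :: "'x \<Rightarrow> 'y" and \<pi>X :: "'x \<Rightarrow> 'ex" and \<pi>Y :: "'y \<Rightarrow> 'ey"
  assumes "locally_compact_space (euclidean :: 'g topology)"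
    and "continuous_action actX X" and "X \<noteq> {}" and "minimal_action actX X"
    and "continuous_action actY Y"
    and "proximal_factor_map actX X actY Y \<phi>"
    and "max_equicontinuous_factor actX X actEX Xeq \<pi>X"
    and "max_equicontinuous_factor actY Y actEY Yeq \<pi>Y"
  shows "\<forall>u\<in>Yeq. \<forall>v\<in>Xeq.
           coincidence_rank_at actY Y \<pi>Y u \<le> coincidence_rank_at actX X \<pi>X v \<and>
           coincidence_rank_at actX X \<pi>X v \<le> minimal_rank Y Yeq \<pi>Y"
proof -
  note cX = assms(2) and minX = assms(4) and cY = assms(5) and pf = assms(6)
    and mxX = assms(7) and mxY = assms(8)
  have cEX: "continuous_action actEX Xeq" and eEX: "equicontinuous_action actEX Xeq"
    and fX: "factor_map actX X actEX Xeq \<pi>X"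
    using mxX unfolding max_equicontinuous_factor_def by auto
  have cEY: "continuous_action actEY Yeq" and eEY: "equicontinuous_action actEY Yeq"
    and fY: "factor_map actY Y actEY Yeq \<pi>Y"
    using mxY unfolding max_equicontinuous_factor_def by auto
  have fphi: "factor_map actX X actY Y \<phi>"
    and prfx: "\<forall>x\<in>X. \<forall>y\<in>X. \<phi> x = \<phi> y \<longrightarrow> (x, y) \<in> proximal_pairs actX X"
    using pf unfolding proximal_factor_map_def by auto
  have fp: "continuous_on X \<phi>" "\<phi> ` X = Y" "\<forall>g. \<forall>x\<in>X. \<phi> (actX g x) = actY g (\<phi> x)"
    using fphi unfolding factor_map_def by auto
  have fx: "continuous_on X \<pi>X" "\<pi>X ` X = Xeq" "\<forall>g. \<forall>x\<in>X. \<pi>X (actX g x) = actEX g (\<pi>X x)"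
    using fX unfolding factor_map_def by auto
  have fy: "continuous_on Y \<pi>Y" "\<pi>Y ` Y = Yeq" "\<forall>g. \<forall>y\<in>Y. \<pi>Y (actY g y) = actEY g (\<pi>Y y)"
    using fY unfolding factor_map_def by auto
  have aX: "\<forall>g. \<forall>x\<in>X. actX g x \<in> X" using cX unfolding continuous_action_def by auto
  have fcomp: "factor_map actX X actEY Yeq (\<lambda>x. \<pi>Y (\<phi> x))"
    unfolding factor_map_def
  proof (intro conjI ballI allI)
    show "continuous_on X (\<lambda>x. \<pi>Y (\<phi> x))"
      using continuous_on_compose[OF fp(1)] fy(1) fp(2) by (simp add: o_def)
    show "(\<lambda>x. \<pi>Y (\<phi> x)) ` X = Yeq" using fp(2) fy(2) by (metis image_image)
    show "\<pi>Y (\<phi> (actX g x)) = actEY g (\<pi>Y (\<phi> x))" if "x \<in> X" for g x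
      using that fp fy(3) by auto
  qed
  obtain \<psi> where f\<psi>: "factor_map actY Y actEX Xeq \<psi>" and psi: "\<forall>x\<in>X. \<psi> (\<phi> x) = \<pi>X x"
    using induced_factor[OF cX cY pf cEX eEX fX] by blast
  have B: "\<pi>X x = \<pi>X x'" if "x \<in> X" "x' \<in> X" "\<pi>Y (\<phi> x) = \<pi>Y (\<phi> x')" for x x'
  proof -
    have "\<phi> x \<in> Y" "\<phi> x' \<in> Y" using that fp(2) by auto
    then have "\<psi> (\<phi> x) = \<psi> (\<phi> x')" using max_eq_transfer[OF mxY cEX eEX f\<psi>] that(3) by blast
    then show ?thesis using psi that by auto
  qed
  have A: "\<pi>Y (\<phi> x) = \<pi>Y (\<phi> x')" if "x \<in> X" "x' \<in> X" "\<pi>X x = \<pi>X x'" for x x'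
    using max_eq_transfer[OF mxX cEY eEY fcomp] that by blast
  show ?thesis
  proof (intro ballI conjI)
    fix u v assume u: "u \<in> Yeq" and v: "v \<in> Xeq"
    show "coincidence_rank_at actY Y \<pi>Y u \<le> coincidence_rank_at actX X \<pi>X v"
      unfolding coincidence_rank_at_def
    proof (rule Sup_subset_mono, clarify)
      fix n :: nat and ys :: "nat \<Rightarrow> 'y"
      assume ys: "\<forall>i<n. ys i \<in> Y \<and> \<pi>Y (ys i) = u"
        and ynp: "\<forall>i<n. \<forall>j<n. i \<noteq> j \<longrightarrow> (ys i, ys j) \<notin> proximal_pairs actY Y"
      show "\<exists>m. enat n = enat m \<and> (\<exists>xs :: nat \<Rightarrow> 'x. (\<forall>i<m. xs i \<in> X \<and> \<pi>X (xs i) = v) \<and>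
              (\<forall>i<m. \<forall>j<m. i \<noteq> j \<longrightarrow> (xs i, xs j) \<notin> proximal_pairs actX X))"
      proof (cases "n = 0")
        case True
        then show ?thesis by auto
      next
        case False
        have "\<forall>i. \<exists>x. i < n \<longrightarrow> x \<in> X \<and> \<phi> x = ys i"
        proof
          fix i show "\<exists>x. i < n \<longrightarrow> x \<in> X \<and> \<phi> x = ys i"
          proof (cases "i < n")
            case True
            then have "ys i \<in> \<phi> ` X" using ys fp(2) by auto
            then show ?thesis by auto
          qed auto
        qed
        then obtain xs where xs: "\<And>i. i < n \<Longrightarrow> xs i \<in> X" "\<And>i. i < n \<Longrightarrow> \<phi> (xs i) = ys i" by metis
        have n0: "0 < n" using False by simp
        have fib: "\<pi>X (xs i) = \<pi>X (xs 0)" if "i < n" for i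
        proof -
          have "\<pi>Y (\<phi> (xs i)) = \<pi>Y (\<phi> (xs 0))" using xs(2)[OF that] xs(2)[OF n0] ys that n0 by simp
          then show ?thesis by (rule B[OF xs(1)[OF that] xs(1)[OF n0]])
        qed
        have xnp: "(xs i, xs j) \<notin> proximal_pairs actX X" if "i < n" "j < n" "i \<noteq> j" for i j
        proof
          assume "(xs i, xs j) \<in> proximal_pairs actX X"
          then have "(\<phi> (xs i), \<phi> (xs j)) \<in> proximal_pairs actY Y" by (rule proximal_image[OF cX fphi])
          then show False using ynp that xs(2) by simp
        qed
        obtain x' where x': "x' \<in> X" "\<pi>X x' = v" using v fx(2) by auto
        have Feq: "\<forall>g. \<forall>i<n. \<pi>X (actX g (xs i)) = \<pi>X (actX g (xs 0))"
        proof (intro allI impI)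
          fix g i assume i: "i < n"
          have "\<pi>X (actX g (xs i)) = actEX g (\<pi>X (xs i))" using fx(3) xs(1)[OF i] by blast
          also have "\<dots> = actEX g (\<pi>X (xs 0))" using fib[OF i] by simp
          also have "\<dots> = \<pi>X (actX g (xs 0))" using fx(3) xs(1)[OF n0] by metis
          finally show "\<pi>X (actX g (xs i)) = \<pi>X (actX g (xs 0))" .
        qed
        obtain zs where zs: "\<forall>i<n. zs i \<in> X \<and> \<pi>X (zs i) = \<pi>X x'"
          "\<forall>i<n. \<forall>j<n. (xs i, xs j) \<notin> proximal_pairs actX X \<longrightarrow> (zs i, zs j) \<notin> proximal_pairs actX X"
        proof -
          have xsX: "\<forall>i<n. xs i \<in> X" using xs(1) by blast
          show ?thesis using move_tuple[OF cX minX xs(1)[OF n0] x'(1) xsX fx(1) Feq] that by blast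
        qed
        show ?thesis by (intro exI[of _ n] conjI refl exI[of _ zs]) (use zs xnp x'(2) in auto)
      qed
    qed
    show "coincidence_rank_at actX X \<pi>X v \<le> minimal_rank Y Yeq \<pi>Y"
      unfolding coincidence_rank_at_def minimal_rank_def
    proof (rule Sup_least, clarify)
      fix n :: nat and xs :: "nat \<Rightarrow> 'x"
      assume xs: "\<forall>i<n. xs i \<in> X \<and> \<pi>X (xs i) = v"
        and xnp: "\<forall>i<n. \<forall>j<n. i \<noteq> j \<longrightarrow> (xs i, xs j) \<notin> proximal_pairs actX X"
      show "enat n \<le> (INF y\<in>Yeq. ecard {x \<in> Y. \<pi>Y x = y})"
      proof (rule INF_greatest)
        fix u assume u: "u \<in> Yeq"
        show "enat n \<le> ecard {x \<in> Y. \<pi>Y x = u}"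
        proof (cases "n = 0")
          case True
          then show ?thesis by (simp add: zero_enat_def[symmetric])
        next
          case False
          have n0: "0 < n" using False by simp
          have xsX: "\<forall>i<n. xs i \<in> X" using xs by auto
          have Feq: "\<forall>g. \<forall>i<n. \<pi>Y (\<phi> (actX g (xs i))) = \<pi>Y (\<phi> (actX g (xs 0)))"
          proof (intro allI impI)
            fix g i assume i: "i < n"
            have e: "\<pi>X (actX g (xs i)) = \<pi>X (actX g (xs 0))" using fx(3) xs i n0 by auto
            have m: "actX g (xs i) \<in> X" "actX g (xs 0) \<in> X" using aX xs i n0 by auto
            show "\<pi>Y (\<phi> (actX g (xs i))) = \<pi>Y (\<phi> (actX g (xs 0)))"
              by (rule A[OF m e])
          qed
          obtain x' where x': "x' \<in> X" "\<pi>Y (\<phi> x') = u" using u fcomp unfolding factor_map_def by auto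
          have Fc: "continuous_on X (\<lambda>x. \<pi>Y (\<phi> x))" using fcomp unfolding factor_map_def by auto
          obtain zs where zs: "\<forall>i<n. zs i \<in> X \<and> \<pi>Y (\<phi> (zs i)) = \<pi>Y (\<phi> x')"
            "\<forall>i<n. \<forall>j<n. (xs i, xs j) \<notin> proximal_pairs actX X \<longrightarrow> (zs i, zs j) \<notin> proximal_pairs actX X"
          proof -
            have "xs 0 \<in> X" using xsX n0 by blast
            then show ?thesis using move_tuple[OF cX minX _ x'(1) xsX Fc Feq] that by blast
          qed
          show ?thesis
          proof (rule enat_le_ecard[of n "\<lambda>i. \<phi> (zs i)"])
            show "\<forall>i<n. \<phi> (zs i) \<in> {x \<in> Y. \<pi>Y x = u}" using zs(1) x'(2) fp(2) by auto
            show "inj_on (\<lambda>i. \<phi> (zs i)) {..<n}"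
            proof (rule inj_onI, rule ccontr)
              fix i j assume ij: "i \<in> {..<n}" "j \<in> {..<n}" "\<phi> (zs i) = \<phi> (zs j)" "i \<noteq> j"
              then have "(zs i, zs j) \<in> proximal_pairs actX X" using prfx zs(1) by auto
              moreover have "(zs i, zs j) \<notin> proximal_pairs actX X" using zs(2) xnp ij by auto
              ultimately show False by simp
            qed
          qed
        qed
      qed
    qed
  qed
qed

end
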